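(* Let $\Omega$ be a finite set, $k\geq3$, $\Psi$ a finite nonempty set of functions $\Omega^k\to(0,\infty)$ and $\Psi^*=\{\psi^J:\psi\in\Psi,\,J\subset[k]\}$. For every integer $L>0$ and every $\alpha>0$ there exist $\varepsilon=\varepsilon(\alpha,L,\Psi)>0$ and $n_0=n_0(\varepsilon,L)$ such that the following holds. Let $G$ be a factor graph with $n>n_0$ variable nodes all of whose weight functions lie in $\Psi^*$, and suppose $\mu_G$ is $(\varepsilon,2)$-symmetric. Let $G^+$ be obtained from $G$ by adding $L$ constraint nodes $b_1,\ldots,b_L$ with arbitrary neighbourhoods and arbitrary weight functions $\psi_{b_1},\ldots,\psi_{b_L}\in\Psi^*$. Then $\mu_{G^+}$ is $(\alpha,2)$-symmetric and $$\sum_{x\in V(G)}\left\|\mu_{G,x}-\mu_{G^+,x}\right\|_{TV}<\alpha n.$$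
   Context: Factor graphs: a factor graph $G$ has variable nodes $V(G)$, constraint nodes $F(G)$, for each $a\in F(G)$ an ordered tuple $\partial a$ of variable nodes and a weight function $\psi_a:\Omega^{|\partial a|}\to(0,\infty)$; its Gibbs measure is $\mu_G(\sigma)=Z_G^{-1}\prod_a\psi_a(\sigma(\partial a))$ on $\Omega^{V(G)}$, and $\mu_{G,x}$ is the marginal of $x$. For $\psi:\Omega^k\to(0,\infty)$ and $J\subset[k]$, $\psi^J:\Omega^J\to(0,\infty)$ is $\psi^J((\sigma_j)_{j\in J})=|\Omega|^{|J|-k}\sum_{(\sigma_j)_{j\notin J}\in\Omega^{k-|J|}}\psi(\sigma_1,\ldots,\sigma_k)$. For a probability measure $\mu$ on $\Omega^n$ (coordinates identified with the $n$ variable nodes), $\mu_x$ and $\mu_{x,y}$ denote its one- and two-coordinate marginals; $\mu$ is $(\varepsilon,2)$-symmetric if $\sum_{x,y\in[n]}\|\mu_{x,y}-\mu_x\otimes\mu_y\|_{TV}<\varepsilon n^2$. *)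

theory Defs
  imports Complex_Main "HOL-Library.FuncSet"
begin

text \<open>The spin set Omega is a finite type 'o. A k-ary weight function is a function on
  lists (tuples) of spins; only its values on lists of the right length matter.\<close>

text \<open>psi^J for J a subset of {0..<k}: the tuple (sigma_j)_{j in J} is listed in increasing
  order of j, which is exactly nths sigma J.\<close>
definition psiJ :: "nat \<Rightarrow> ('o::finite list \<Rightarrow> real) \<Rightarrow> nat set \<Rightarrow> 'o list \<Rightarrow> real" where
  "psiJ k \<psi> J \<tau> = real (card (UNIV :: 'o set)) powr (real (card J) - real k) *
     (\<Sum>\<sigma>\<in>{\<sigma>. length \<sigma> = k \<and> nths \<sigma> J = \<tau>}. \<psi> \<sigma>)"

definition psi_star :: "nat \<Rightarrow> ('o::finite list \<Rightarrow> real) set \<Rightarrow> (('o list \<Rightarrow> real) \<times> nat) set" where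
  "psi_star k \<Psi> = {(psiJ k \<psi> J, card J) | \<psi> J. \<psi> \<in> \<Psi> \<and> J \<subseteq> {..<k}}"

text \<open>A factor graph with variable nodes {0..<n} is given by n together with the list of its
  constraint nodes; each constraint node is a pair (neighbourhood tuple, weight function).\<close>
type_synonym 'o constraints = "(nat list \<times> ('o list \<Rightarrow> real)) list"

definition valid_fg :: "nat \<Rightarrow> (('o list \<Rightarrow> real) \<times> nat) set \<Rightarrow> 'o constraints \<Rightarrow> bool" where
  "valid_fg n W G = (\<forall>(d, \<psi>) \<in> set G. set d \<subseteq> {..<n} \<and> (\<psi>, length d) \<in> W)"

definition configs :: "nat \<Rightarrow> (nat \<Rightarrow> 'o) set" where
  "configs n = PiE {..<n} (\<lambda>_. UNIV)"

definition weight :: "'o constraints \<Rightarrow> (nat \<Rightarrow> 'o) \<Rightarrow> real" where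
  "weight G \<sigma> = prod_list (map (\<lambda>(d, \<psi>). \<psi> (map \<sigma> d)) G)"

definition partition_fn :: "nat \<Rightarrow> 'o constraints \<Rightarrow> real" where
  "partition_fn n G = (\<Sum>\<sigma>\<in>configs n. weight G \<sigma>)"

definition gibbs :: "nat \<Rightarrow> 'o constraints \<Rightarrow> (nat \<Rightarrow> 'o) \<Rightarrow> real" where
  "gibbs n G \<sigma> = weight G \<sigma> / partition_fn n G"

definition marg1 :: "nat \<Rightarrow> 'o constraints \<Rightarrow> nat \<Rightarrow> 'o \<Rightarrow> real" where
  "marg1 n G x \<omega> = (\<Sum>\<sigma>\<in>{\<sigma>\<in>configs n. \<sigma> x = \<omega>}. gibbs n G \<sigma>)"

definition marg2 :: "nat \<Rightarrow> 'o constraints \<Rightarrow> nat \<Rightarrow> nat \<Rightarrow> 'o \<times> 'o \<Rightarrow> real" where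
  "marg2 n G x y p = (\<Sum>\<sigma>\<in>{\<sigma>\<in>configs n. \<sigma> x = fst p \<and> \<sigma> y = snd p}. gibbs n G \<sigma>)"

definition tv :: "('b::finite \<Rightarrow> real) \<Rightarrow> ('b \<Rightarrow> real) \<Rightarrow> real" where
  "tv p q = (1/2) * (\<Sum>z\<in>UNIV. \<bar>p z - q z\<bar>)"

definition symmetric2 :: "real \<Rightarrow> nat \<Rightarrow> 'o::finite constraints \<Rightarrow> bool" where
  "symmetric2 \<epsilon> n G =
     ((\<Sum>x<n. \<Sum>y<n. tv (marg2 n G x y) (\<lambda>p. marg1 n G x (fst p) * marg1 n G y (snd p)))
        < \<epsilon> * real n ^ 2)"

end

theory Submission
  imports Defs
begin

lemma nths_exists:
  fixes \<tau> :: "'a list"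
  shows "J \<subseteq> {..<k} \<Longrightarrow> length \<tau> = card J \<Longrightarrow> \<exists>\<sigma>. length \<sigma> = k \<and> nths \<sigma> J = \<tau>"
proof (induction k arbitrary: J \<tau>)
  case 0
  then show ?case by auto
next
  case (Suc k)
  define J' where "J' = {j. Suc j \<in> J}"
  have J'k: "J' \<subseteq> {..<k}" using Suc.prems(1) by (auto simp: J'_def)
  have Jeq: "J = (if 0 \<in> J then {0} else {}) \<union> Suc ` J'"
  proof (intro set_eqI iffI)
    fix x assume "x \<in> J" thus "x \<in> (if 0 \<in> J then {0} else {}) \<union> Suc ` J'"
    proof (cases x)
      case (Suc j) thus ?thesis using \<open>x \<in> J\<close> by (simp add: J'_def)
    qed simp
  next
    fix x assume "x \<in> (if 0 \<in> J then {0} else {}) \<union> Suc ` J'"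
    thus "x \<in> J" by (auto simp: J'_def split: if_splits)
  qed
  have fin: "finite J'" using J'k finite_subset by blast
  have cS: "card (Suc ` J') = card J'" by (simp add: card_image)
  show ?case
  proof (cases "0 \<in> J")
    case True
    have "card J = Suc (card J')"
    proof -
      have "J = insert 0 (Suc ` J')" using Jeq True by simp
      moreover have "0 \<notin> Suc ` J'" by auto
      ultimately show ?thesis using fin cS by (simp add: card_insert_disjoint)
    qed
    then obtain t \<tau>' where tau: "\<tau> = t # \<tau>'" "length \<tau>' = card J'"
      using Suc.prems(2) by (cases \<tau>) auto
    obtain \<sigma>' where s: "length \<sigma>' = k" "nths \<sigma>' J' = \<tau>'" using Suc.IH[OF J'k tau(2)] by blast
    show ?thesis using True s tau
      by (intro exI[of _ "t # \<sigma>'"]) (simp add: nths_Cons J'_def)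
  next
    case False
    have "card J = card J'" using Jeq False cS by simp
    then obtain \<sigma>' where s: "length \<sigma>' = k" "nths \<sigma>' J' = \<tau>" using Suc.IH[OF J'k] Suc.prems(2) by metis
    show ?thesis using False s
      by (intro exI[of _ "undefined # \<sigma>'"]) (simp add: nths_Cons J'_def)
  qed
qed

lemma finite_len: "finite {\<tau>::'o::finite list. length \<tau> = n}"
  using finite_lists_length_eq[of "UNIV::'o set" n] by simp

lemma psiJ_pos:
  fixes \<psi> :: "'o::finite list \<Rightarrow> real"
  assumes "\<forall>\<sigma>. length \<sigma> = k \<longrightarrow> \<psi> \<sigma> > 0" "J \<subseteq> {..<k}" "length \<tau> = card J"
  shows "psiJ k \<psi> J \<tau> > 0"
proof -
  let ?S = "{\<sigma>::'o list. length \<sigma> = k \<and> nths \<sigma> J = \<tau>}"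
  have fin: "finite ?S"
    by (rule finite_subset[OF _ finite_lists_length_eq[of "UNIV::'o set" k]]) auto
  obtain \<sigma> where "\<sigma> \<in> ?S" using nths_exists[OF assms(2,3)] by blast
  hence ne: "?S \<noteq> {}" by blast
  have "(\<Sum>\<sigma>\<in>?S. \<psi> \<sigma>) > 0"
    using fin ne assms(1) by (intro sum_pos) auto
  moreover have "real (card (UNIV :: 'o set)) > 0" by (simp add: finite_UNIV_card_ge_0)
  ultimately show ?thesis unfolding psiJ_def by simp
qed

lemma weight_bounds:
  fixes k :: nat and \<Psi> :: "('o::finite list \<Rightarrow> real) set"
  assumes "finite \<Psi>" "\<forall>\<psi>\<in>\<Psi>. \<forall>\<sigma>. length \<sigma> = k \<longrightarrow> \<psi> \<sigma> > 0"
  shows "\<exists>m0 M0. 0 < m0 \<and> (\<forall>f a \<tau>. (f, a) \<in> psi_star k \<Psi> \<and> length \<tau> = a \<longrightarrow> m0 \<le> f \<tau> \<and> f \<tau> \<le> M0)"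
proof -
  define V where "V = {f \<tau> | f a \<tau>. (f, a) \<in> psi_star k \<Psi> \<and> length (\<tau>::'o list) = a}"
  have V_sub: "V \<subseteq> (\<Union>\<psi>\<in>\<Psi>. \<Union>J\<in>Pow {..<k}. (psiJ k \<psi> J) ` {\<tau>. length \<tau> = card J})"
    unfolding V_def psi_star_def by blast
  have finV: "finite V"
    by (rule finite_subset[OF V_sub]) (auto intro!: finite_UN_I assms(1) finite_imageI finite_len)
  have posV: "\<forall>v\<in>V. v > 0"
    unfolding V_def psi_star_def using psiJ_pos assms(2) by blast
  define m0 where "m0 = Min (insert 1 V)"
  define M0 where "M0 = Max (insert 1 V)"
  have "0 < m0" unfolding m0_def using finV posV by (subst Min_gr_iff) auto
  moreover have "\<forall>f a \<tau>. (f, a) \<in> psi_star k \<Psi> \<and> length \<tau> = a \<longrightarrow> m0 \<le> f \<tau> \<and> f \<tau> \<le> M0"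
  proof (intro allI impI)
    fix f a and \<tau> :: "'o list" assume h: "(f, a) \<in> psi_star k \<Psi> \<and> length \<tau> = a"
    hence "f \<tau> \<in> V" unfolding V_def by blast
    thus "m0 \<le> f \<tau> \<and> f \<tau> \<le> M0" unfolding m0_def M0_def using finV by auto
  qed
  ultimately show ?thesis by blast
qed

definition EE :: "('a \<Rightarrow> real) \<Rightarrow> 'a set \<Rightarrow> ('a \<Rightarrow> real) \<Rightarrow> real" where
  "EE p C f = (\<Sum>\<sigma>\<in>C. p \<sigma> * f \<sigma>)"

lemma EE_abs_sq:
  assumes "finite C" "\<forall>\<sigma>\<in>C. p \<sigma> \<ge> 0" "sum p C = 1"
  shows "EE p C (\<lambda>\<sigma>. \<bar>f \<sigma>\<bar>) \<le> sqrt (EE p C (\<lambda>\<sigma>. (f \<sigma>)^2))"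
proof -
  define c where "c = EE p C (\<lambda>\<sigma>. \<bar>f \<sigma>\<bar>)"
  have c0: "c \<ge> 0" unfolding c_def EE_def using assms by (intro sum_nonneg) auto
  have "0 \<le> (\<Sum>\<sigma>\<in>C. p \<sigma> * (\<bar>f \<sigma>\<bar> - c)^2)" using assms by (intro sum_nonneg) auto
  also have "\<dots> = (\<Sum>\<sigma>\<in>C. p \<sigma> * (f \<sigma>)^2 - 2 * c * (p \<sigma> * \<bar>f \<sigma>\<bar>) + c^2 * p \<sigma>)"
    by (intro sum.cong) (auto simp: power2_eq_square algebra_simps)
  also have "\<dots> = EE p C (\<lambda>\<sigma>. (f \<sigma>)^2) - 2 * c * c + c^2 * 1"
    unfolding EE_def c_def sum.distrib sum_subtractf sum_distrib_left[symmetric] assms(3) by simp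
  finally have "c^2 \<le> EE p C (\<lambda>\<sigma>. (f \<sigma>)^2)" by (simp add: power2_eq_square)
  thus ?thesis unfolding c_def[symmetric] using c0 by (simp add: real_le_rsqrt)
qed

lemma key:
  assumes "finite C" "\<forall>\<sigma>\<in>C. p \<sigma> \<ge> 0" "sum p C = 1" "finite Y" "\<forall>\<sigma>\<in>C. \<bar>g \<sigma>\<bar> \<le> K"
  shows "(\<Sum>y\<in>Y. \<bar>EE p C (\<lambda>\<sigma>. g \<sigma> * h y \<sigma>)\<bar>)
         \<le> K * sqrt (\<Sum>y\<in>Y. \<Sum>z\<in>Y. \<bar>EE p C (\<lambda>\<sigma>. h y \<sigma> * h z \<sigma>)\<bar>)"
proof -
  have "C \<noteq> {}" using assms(3) by auto
  then obtain \<sigma>0 where "\<sigma>0 \<in> C" by blast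
  hence K0: "K \<ge> 0" using assms(5) by force
  define s where "s y = sgn (EE p C (\<lambda>\<sigma>. g \<sigma> * h y \<sigma>))" for y
  define W where "W \<sigma> = (\<Sum>y\<in>Y. s y * h y \<sigma>)" for \<sigma>
  have s1: "\<bar>s y\<bar> \<le> 1" for y unfolding s_def by (simp add: abs_sgn_eq)
  have "(\<Sum>y\<in>Y. \<bar>EE p C (\<lambda>\<sigma>. g \<sigma> * h y \<sigma>)\<bar>) = (\<Sum>y\<in>Y. s y * EE p C (\<lambda>\<sigma>. g \<sigma> * h y \<sigma>))"
    unfolding s_def by (intro sum.cong) (auto simp: abs_sgn)
  also have "\<dots> = EE p C (\<lambda>\<sigma>. g \<sigma> * W \<sigma>)"
    unfolding EE_def W_def sum_distrib_left
    by (subst sum.swap) (intro sum.cong, auto simp: algebra_simps)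
  also have "\<dots> \<le> EE p C (\<lambda>\<sigma>. K * \<bar>W \<sigma>\<bar>)"
    unfolding EE_def
  proof (intro sum_mono)
    fix \<sigma> assume "\<sigma> \<in> C"
    hence "g \<sigma> * W \<sigma> \<le> K * \<bar>W \<sigma>\<bar>" using assms(5)
      by (metis abs_ge_self abs_mult abs_ge_zero mult_right_mono order_trans)
    thus "p \<sigma> * (g \<sigma> * W \<sigma>) \<le> p \<sigma> * (K * \<bar>W \<sigma>\<bar>)" using assms(2) \<open>\<sigma> \<in> C\<close>
      by (intro mult_left_mono) auto
  qed
  also have "\<dots> = K * EE p C (\<lambda>\<sigma>. \<bar>W \<sigma>\<bar>)" unfolding EE_def sum_distrib_left by (simp add: algebra_simps)
  also have "\<dots> \<le> K * sqrt (EE p C (\<lambda>\<sigma>. (W \<sigma>)^2))"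
    using EE_abs_sq[OF assms(1-3)] K0 by (intro mult_left_mono) auto
  also have "EE p C (\<lambda>\<sigma>. (W \<sigma>)^2) = (\<Sum>y\<in>Y. \<Sum>z\<in>Y. s y * s z * EE p C (\<lambda>\<sigma>. h y \<sigma> * h z \<sigma>))"
    unfolding EE_def W_def power2_eq_square sum_product sum_distrib_left
    apply (subst sum.swap)
    apply (intro sum.cong refl)
    apply (subst sum.swap)
    by (intro sum.cong refl) (simp add: sum_distrib_left sum_distrib_right mult_ac)
  also have "\<dots> \<le> (\<Sum>y\<in>Y. \<Sum>z\<in>Y. \<bar>EE p C (\<lambda>\<sigma>. h y \<sigma> * h z \<sigma>)\<bar>)"
  proof (intro sum_mono)
    fix y z
    have "\<bar>s y * s z\<bar> \<le> 1" using s1[of y] s1[of z] by (simp add: abs_mult mult_le_one)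
    hence "s y * s z * EE p C (\<lambda>\<sigma>. h y \<sigma> * h z \<sigma>) \<le> \<bar>s y * s z\<bar> * \<bar>EE p C (\<lambda>\<sigma>. h y \<sigma> * h z \<sigma>)\<bar>"
      by (metis abs_ge_self abs_mult)
    also have "\<dots> \<le> \<bar>EE p C (\<lambda>\<sigma>. h y \<sigma> * h z \<sigma>)\<bar>"
      using \<open>\<bar>s y * s z\<bar> \<le> 1\<close> by (simp add: mult_left_le_one_le)
    finally show "s y * s z * EE p C (\<lambda>\<sigma>. h y \<sigma> * h z \<sigma>) \<le> \<bar>EE p C (\<lambda>\<sigma>. h y \<sigma> * h z \<sigma>)\<bar>" .
  qed
  finally show ?thesis using K0 by (simp add: mult_left_mono)
qed

definition ind :: "nat \<Rightarrow> 'o \<Rightarrow> (nat \<Rightarrow> 'o) \<Rightarrow> real" where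
  "ind x \<omega> \<sigma> = (if \<sigma> x = \<omega> then 1 else 0)"

locale setting =
  fixes C :: "(nat \<Rightarrow> 'o::finite) set" and \<mu> F :: "(nat \<Rightarrow> 'o) \<Rightarrow> real" and m M \<delta> :: real and n :: nat
  assumes finC: "finite C" and mu0: "\<forall>\<sigma>\<in>C. \<mu> \<sigma> \<ge> 0" and mu1: "sum \<mu> C = 1"
    and Fb: "\<forall>\<sigma>\<in>C. m \<le> F \<sigma> \<and> F \<sigma> \<le> M" and m0: "m > 0" and d0: "\<delta> \<ge> 0"
    and cvb: "\<forall>\<omega>. (\<Sum>y<n. \<Sum>z<n. \<bar>EE \<mu> C (\<lambda>\<sigma>. (ind y \<omega> \<sigma> - EE \<mu> C (ind y \<omega>)) * (ind z \<omega> \<sigma> - EE \<mu> C (ind z \<omega>)))\<bar>) \<le> (\<delta> * n)^2"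
begin

definition D where "D = EE \<mu> C F"
definition \<nu> where "\<nu> \<sigma> = \<mu> \<sigma> * F \<sigma> / D"
definition a where "a x \<omega> = EE \<mu> C (ind x \<omega>)"
definition X where "X x \<omega> \<sigma> = ind x \<omega> \<sigma> - a x \<omega>"

lemma EE_lin: "EE \<mu> C (\<lambda>\<sigma>. f \<sigma> - c * g \<sigma>) = EE \<mu> C f - c * EE \<mu> C g"
  unfolding EE_def by (simp add: sum_subtractf sum_distrib_left algebra_simps)

lemma EE_const: "EE \<mu> C (\<lambda>\<sigma>. c) = c"
  unfolding EE_def using mu1 by (simp add: sum_distrib_right[symmetric])

lemma EE_mono: "(\<And>\<sigma>. \<sigma> \<in> C \<Longrightarrow> f \<sigma> \<le> g \<sigma>) \<Longrightarrow> EE \<mu> C f \<le> EE \<mu> C g"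
  unfolding EE_def using mu0 by (intro sum_mono mult_left_mono) auto

lemma EE_abs: "\<bar>EE \<mu> C f\<bar> \<le> EE \<mu> C (\<lambda>\<sigma>. \<bar>f \<sigma>\<bar>)"
  unfolding EE_def
  by (rule order_trans[OF sum_abs], rule sum_mono) (use mu0 in \<open>simp add: abs_mult\<close>)

lemma D_ge: "D \<ge> m"
proof -
  have "EE \<mu> C (\<lambda>\<sigma>. m) \<le> D" unfolding D_def using Fb by (intro EE_mono) auto
  thus ?thesis by (simp add: EE_const)
qed

lemma D_pos: "D > 0" using D_ge m0 by simp

lemma M_ge: "M \<ge> 0"
proof -
  have "C \<noteq> {}" using mu1 by auto
  thus ?thesis using Fb m0 by force
qed

lemma a01: "0 \<le> a x \<omega> \<and> a x \<omega> \<le> 1"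
proof -
  have "EE \<mu> C (\<lambda>\<sigma>. 0) \<le> a x \<omega>" "a x \<omega> \<le> EE \<mu> C (\<lambda>\<sigma>. 1)"
    unfolding a_def by (intro EE_mono, simp add: ind_def)+
  thus ?thesis by (simp add: EE_const)
qed

lemma X_abs: "\<bar>X x \<omega> \<sigma>\<bar> \<le> 1" using a01[of x \<omega>] unfolding X_def ind_def by auto

lemma EEnu: "EE \<nu> C f = EE \<mu> C (\<lambda>\<sigma>. F \<sigma> * f \<sigma>) / D"
  unfolding EE_def \<nu>_def by (simp add: sum_divide_distrib algebra_simps)

lemma diff1: "EE \<nu> C (ind x \<omega>) - a x \<omega> = EE \<mu> C (\<lambda>\<sigma>. F \<sigma> * X x \<omega> \<sigma>) / D"
proof -
  have "EE \<mu> C (\<lambda>\<sigma>. F \<sigma> * X x \<omega> \<sigma>) = EE \<mu> C (\<lambda>\<sigma>. F \<sigma> * ind x \<omega> \<sigma> - a x \<omega> * F \<sigma>)"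
    unfolding X_def by (simp add: algebra_simps)
  also have "\<dots> = EE \<mu> C (\<lambda>\<sigma>. F \<sigma> * ind x \<omega> \<sigma>) - a x \<omega> * D"
    unfolding D_def by (rule EE_lin)
  finally show ?thesis using D_pos by (simp add: EEnu field_simps)
qed

lemma keyF:
  assumes "\<forall>\<sigma>\<in>C. \<bar>g \<sigma>\<bar> \<le> M"
  shows "(\<Sum>y<n. \<bar>EE \<mu> C (\<lambda>\<sigma>. g \<sigma> * X y \<omega> \<sigma>)\<bar>) \<le> M * (\<delta> * n)"
proof -
  have "(\<Sum>y<n. \<bar>EE \<mu> C (\<lambda>\<sigma>. g \<sigma> * X y \<omega> \<sigma>)\<bar>)
     \<le> M * sqrt (\<Sum>y<n. \<Sum>z<n. \<bar>EE \<mu> C (\<lambda>\<sigma>. X y \<omega> \<sigma> * X z \<omega> \<sigma>)\<bar>)"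
    by (rule key[OF finC mu0 mu1 _ assms]) simp
  also have "\<dots> \<le> M * sqrt ((\<delta> * n)^2)"
    using cvb M_ge unfolding X_def a_def by (intro mult_left_mono real_sqrt_le_mono) auto
  also have "\<dots> = M * (\<delta> * n)" using d0 by simp
  finally show ?thesis .
qed

lemma sum_diff1: "(\<Sum>x<n. \<bar>EE \<nu> C (ind x \<omega>) - a x \<omega>\<bar>) \<le> M * (\<delta> * n) / m"
proof -
  have "(\<Sum>x<n. \<bar>EE \<nu> C (ind x \<omega>) - a x \<omega>\<bar>) = (\<Sum>x<n. \<bar>EE \<mu> C (\<lambda>\<sigma>. F \<sigma> * X x \<omega> \<sigma>)\<bar>) / D"
    unfolding diff1 using D_pos by (simp add: sum_divide_distrib)
  also have "\<dots> \<le> (\<Sum>x<n. \<bar>EE \<mu> C (\<lambda>\<sigma>. F \<sigma> * X x \<omega> \<sigma>)\<bar>) / m"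
    using D_ge m0 by (intro divide_left_mono sum_nonneg) auto
  also have "\<dots> \<le> M * (\<delta> * n) / m"
  proof -
    have "\<forall>\<sigma>\<in>C. \<bar>F \<sigma>\<bar> \<le> M" using Fb m0 by force
    thus ?thesis using keyF[of F] m0 by (intro divide_right_mono) auto
  qed
  finally show ?thesis .
qed

lemma R1: "(\<Sum>x<n. tv (\<lambda>\<omega>. EE \<mu> C (ind x \<omega>)) (\<lambda>\<omega>. EE \<nu> C (ind x \<omega>)))
    \<le> real (card (UNIV::'o set)) * (M * (\<delta> * n) / m)"
proof -
  have "(\<Sum>x<n. tv (\<lambda>\<omega>. EE \<mu> C (ind x \<omega>)) (\<lambda>\<omega>. EE \<nu> C (ind x \<omega>)))
     = (1/2) * (\<Sum>\<omega>\<in>UNIV. \<Sum>x<n. \<bar>EE \<nu> C (ind x \<omega>) - a x \<omega>\<bar>)"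
    unfolding tv_def a_def sum_distrib_left[symmetric]
    by (subst sum.swap) (simp add: abs_minus_commute)
  also have "\<dots> \<le> (1/2) * (real (card (UNIV::'o set)) * (M * (\<delta> * n) / m))"
    using sum_bounded_above[of UNIV "\<lambda>\<omega>. \<Sum>x<n. \<bar>EE \<nu> C (ind x \<omega>) - a x \<omega>\<bar>", OF sum_diff1]
    by simp
  also have "\<dots> \<le> real (card (UNIV::'o set)) * (M * (\<delta> * n) / m)"
  proof -
    have "0 \<le> real (card (UNIV::'o set)) * (M * (\<delta> * n))" using M_ge d0 by simp
    thus ?thesis using m0 by (simp add: frac_le)
  qed
  finally show ?thesis .
qed

lemma EE_abs_le1: "\<bar>EE \<nu> C (ind y \<omega>) - a y \<omega>\<bar> \<le> 1"
proof -
  have "\<bar>EE \<mu> C (\<lambda>\<sigma>. F \<sigma> * X y \<omega> \<sigma>)\<bar> \<le> EE \<mu> C (\<lambda>\<sigma>. \<bar>F \<sigma> * X y \<omega> \<sigma>\<bar>)" by (rule EE_abs)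
  also have "\<dots> \<le> EE \<mu> C F"
  proof (rule EE_mono)
    fix \<sigma> assume "\<sigma> \<in> C"
    hence "F \<sigma> \<ge> 0" using Fb m0 by force
    thus "\<bar>F \<sigma> * X y \<omega> \<sigma>\<bar> \<le> F \<sigma>" using X_abs[of y \<omega> \<sigma>] by (simp add: abs_mult mult_left_le)
  qed
  finally show ?thesis unfolding diff1 using D_pos by (simp add: D_def divide_le_eq_1)
qed

lemma pair_id:
  "EE \<nu> C (\<lambda>\<sigma>. ind x \<omega> \<sigma> * ind y \<omega>' \<sigma>) - EE \<nu> C (ind x \<omega>) * EE \<nu> C (ind y \<omega>')
   = EE \<mu> C (\<lambda>\<sigma>. F \<sigma> * X x \<omega> \<sigma> * X y \<omega>' \<sigma>) / D
     - (EE \<nu> C (ind x \<omega>) - a x \<omega>) * (EE \<nu> C (ind y \<omega>') - a y \<omega>')"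
proof -
  have e: "EE \<mu> C (\<lambda>\<sigma>. F \<sigma> * X x \<omega> \<sigma> * X y \<omega>' \<sigma>)
     = EE \<mu> C (\<lambda>\<sigma>. F \<sigma> * (ind x \<omega> \<sigma> * ind y \<omega>' \<sigma>)) - a y \<omega>' * EE \<mu> C (\<lambda>\<sigma>. F \<sigma> * ind x \<omega> \<sigma>)
       - a x \<omega> * EE \<mu> C (\<lambda>\<sigma>. F \<sigma> * ind y \<omega>' \<sigma>) + a x \<omega> * a y \<omega>' * D"
    unfolding EE_def D_def X_def
    by (simp add: sum_subtractf sum.distrib sum_distrib_left algebra_simps)
  show ?thesis using D_pos unfolding EEnu e by (simp add: field_simps)
qed

lemma pair_bound:
  "(\<Sum>x<n. \<Sum>y<n. \<bar>EE \<nu> C (\<lambda>\<sigma>. ind x \<omega> \<sigma> * ind y \<omega>' \<sigma>) - EE \<nu> C (ind x \<omega>) * EE \<nu> C (ind y \<omega>')\<bar>)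
   \<le> 2 * (n * (M * (\<delta> * n) / m))"
proof -
  have inner: "(\<Sum>y<n. \<bar>EE \<mu> C (\<lambda>\<sigma>. F \<sigma> * X x \<omega> \<sigma> * X y \<omega>' \<sigma>) / D\<bar>) \<le> M * (\<delta> * n) / m" for x
  proof -
    have gb: "\<forall>\<sigma>\<in>C. \<bar>F \<sigma> * X x \<omega> \<sigma>\<bar> \<le> M"
    proof
      fix \<sigma> assume "\<sigma> \<in> C"
      hence "F \<sigma> \<ge> 0" "F \<sigma> \<le> M" using Fb m0 by force+
      thus "\<bar>F \<sigma> * X x \<omega> \<sigma>\<bar> \<le> M" using X_abs[of x \<omega> \<sigma>]
        by (simp add: abs_mult) (metis mult_left_le order_trans)
    qed
    have "(\<Sum>y<n. \<bar>EE \<mu> C (\<lambda>\<sigma>. F \<sigma> * X x \<omega> \<sigma> * X y \<omega>' \<sigma>) / D\<bar>)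
        = (\<Sum>y<n. \<bar>EE \<mu> C (\<lambda>\<sigma>. F \<sigma> * X x \<omega> \<sigma> * X y \<omega>' \<sigma>)\<bar>) / D"
      using D_pos by (simp add: sum_divide_distrib)
    also have "\<dots> \<le> (\<Sum>y<n. \<bar>EE \<mu> C (\<lambda>\<sigma>. F \<sigma> * X x \<omega> \<sigma> * X y \<omega>' \<sigma>)\<bar>) / m"
      using D_ge m0 by (intro divide_left_mono sum_nonneg) auto
    also have "\<dots> \<le> M * (\<delta> * n) / m"
      using keyF[OF gb, of \<omega>'] m0 by (intro divide_right_mono) auto
    finally show ?thesis .
  qed
  have "(\<Sum>x<n. \<Sum>y<n. \<bar>EE \<nu> C (\<lambda>\<sigma>. ind x \<omega> \<sigma> * ind y \<omega>' \<sigma>) - EE \<nu> C (ind x \<omega>) * EE \<nu> C (ind y \<omega>')\<bar>)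
     \<le> (\<Sum>x<n. (\<Sum>y<n. \<bar>EE \<mu> C (\<lambda>\<sigma>. F \<sigma> * X x \<omega> \<sigma> * X y \<omega>' \<sigma>) / D\<bar>) + n * \<bar>EE \<nu> C (ind x \<omega>) - a x \<omega>\<bar>)"
  proof (intro sum_mono)
    fix x
    have "(\<Sum>y<n. \<bar>EE \<nu> C (\<lambda>\<sigma>. ind x \<omega> \<sigma> * ind y \<omega>' \<sigma>) - EE \<nu> C (ind x \<omega>) * EE \<nu> C (ind y \<omega>')\<bar>)
      \<le> (\<Sum>y<n. \<bar>EE \<mu> C (\<lambda>\<sigma>. F \<sigma> * X x \<omega> \<sigma> * X y \<omega>' \<sigma>) / D\<bar> + \<bar>EE \<nu> C (ind x \<omega>) - a x \<omega>\<bar>)"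
    proof (intro sum_mono)
      fix y
      have "\<bar>(EE \<nu> C (ind x \<omega>) - a x \<omega>) * (EE \<nu> C (ind y \<omega>') - a y \<omega>')\<bar> \<le> \<bar>EE \<nu> C (ind x \<omega>) - a x \<omega>\<bar>"
        using EE_abs_le1[of y \<omega>'] by (simp add: abs_mult mult_left_le)
      thus "\<bar>EE \<nu> C (\<lambda>\<sigma>. ind x \<omega> \<sigma> * ind y \<omega>' \<sigma>) - EE \<nu> C (ind x \<omega>) * EE \<nu> C (ind y \<omega>')\<bar>
         \<le> \<bar>EE \<mu> C (\<lambda>\<sigma>. F \<sigma> * X x \<omega> \<sigma> * X y \<omega>' \<sigma>) / D\<bar> + \<bar>EE \<nu> C (ind x \<omega>) - a x \<omega>\<bar>"
        unfolding pair_id by linarith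
    qed
    thus "(\<Sum>y<n. \<bar>EE \<nu> C (\<lambda>\<sigma>. ind x \<omega> \<sigma> * ind y \<omega>' \<sigma>) - EE \<nu> C (ind x \<omega>) * EE \<nu> C (ind y \<omega>')\<bar>)
      \<le> (\<Sum>y<n. \<bar>EE \<mu> C (\<lambda>\<sigma>. F \<sigma> * X x \<omega> \<sigma> * X y \<omega>' \<sigma>) / D\<bar>) + n * \<bar>EE \<nu> C (ind x \<omega>) - a x \<omega>\<bar>"
      by (simp add: sum.distrib)
  qed
  also have "\<dots> = (\<Sum>x<n. (\<Sum>y<n. \<bar>EE \<mu> C (\<lambda>\<sigma>. F \<sigma> * X x \<omega> \<sigma> * X y \<omega>' \<sigma>) / D\<bar>)) + n * (\<Sum>x<n. \<bar>EE \<nu> C (ind x \<omega>) - a x \<omega>\<bar>)"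
    by (simp add: sum.distrib sum_distrib_left)
  also have "\<dots> \<le> n * (M * (\<delta> * n) / m) + n * (M * (\<delta> * n) / m)"
    using sum_bounded_above[of "{..<n}", OF inner] sum_diff1[of \<omega>]
    by (intro add_mono mult_left_mono) auto
  finally show ?thesis by (simp add: mult.commute mult.left_commute)
qed

lemma R2: "(\<Sum>x<n. \<Sum>y<n. tv (\<lambda>pr. EE \<nu> C (\<lambda>\<sigma>. ind x (fst pr) \<sigma> * ind y (snd pr) \<sigma>))
            (\<lambda>pr. EE \<nu> C (ind x (fst pr)) * EE \<nu> C (ind y (snd pr))))
    \<le> real (card (UNIV::'o set))^2 * (n * (M * (\<delta> * n) / m))"
proof -
  have "(\<Sum>x<n. \<Sum>y<n. tv (\<lambda>pr. EE \<nu> C (\<lambda>\<sigma>. ind x (fst pr) \<sigma> * ind y (snd pr) \<sigma>))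
            (\<lambda>pr. EE \<nu> C (ind x (fst pr)) * EE \<nu> C (ind y (snd pr))))
     = (1/2) * (\<Sum>pr\<in>UNIV. \<Sum>x<n. \<Sum>y<n. \<bar>EE \<nu> C (\<lambda>\<sigma>. ind x (fst pr) \<sigma> * ind y (snd pr) \<sigma>) - EE \<nu> C (ind x (fst pr)) * EE \<nu> C (ind y (snd pr))\<bar>)"
    (is "?L = (1/2) * ?R")
  proof -
    let ?f = "\<lambda>x y pr. \<bar>EE \<nu> C (\<lambda>\<sigma>. ind x (fst pr) \<sigma> * ind y (snd pr) \<sigma>) - EE \<nu> C (ind x (fst pr)) * EE \<nu> C (ind y (snd pr))\<bar>"
    have "?L = (\<Sum>x<n. \<Sum>y<n. (1/2) * (\<Sum>pr\<in>UNIV. ?f x y pr))"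
      unfolding tv_def by (simp add: abs_minus_commute)
    also have "\<dots> = (1/2) * (\<Sum>x<n. \<Sum>y<n. \<Sum>pr\<in>UNIV. ?f x y pr)"
      by (simp add: sum_distrib_left)
    also have "(\<Sum>x<n. \<Sum>y<n. \<Sum>pr\<in>UNIV. ?f x y pr) = (\<Sum>x<n. \<Sum>pr\<in>UNIV. \<Sum>y<n. ?f x y pr)"
      by (intro sum.cong refl) (rule sum.swap)
    also have "\<dots> = ?R" by (rule sum.swap)
    finally show ?thesis .
  qed
  also have "\<dots> \<le> (1/2) * (real (card (UNIV::('o\<times>'o) set)) * (2 * (n * (M * (\<delta> * n) / m))))"
    using sum_bounded_above[of UNIV, OF pair_bound] by (intro mult_left_mono) auto
  also have "\<dots> = real (card (UNIV::'o set))^2 * (n * (M * (\<delta> * n) / m))"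
    by (simp add: UNIV_Times_UNIV[symmetric] card_cartesian_product del: UNIV_Times_UNIV) (simp add: power2_eq_square)
  finally show ?thesis .
qed

end

lemma weight_bnd:
  assumes "\<forall>(d, \<psi>)\<in>set B. m0 \<le> \<psi> (map \<sigma> d) \<and> \<psi> (map \<sigma> d) \<le> M0" "0 < m0"
  shows "m0 ^ length B \<le> weight B \<sigma> \<and> weight B \<sigma> \<le> M0 ^ length B"
  using assms(1)
proof (induction B)
  case Nil
  then show ?case by (simp add: weight_def)
next
  case (Cons b B)
  obtain d \<psi> where b: "b = (d, \<psi>)" by (cases b)
  have w: "weight (b # B) \<sigma> = \<psi> (map \<sigma> d) * weight B \<sigma>" by (simp add: weight_def b)
  have h: "m0 \<le> \<psi> (map \<sigma> d)" "\<psi> (map \<sigma> d) \<le> M0" using Cons.prems b by auto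
  have IH: "m0 ^ length B \<le> weight B \<sigma>" "weight B \<sigma> \<le> M0 ^ length B" using Cons by auto
  have p: "0 \<le> m0 ^ length B" using assms(2) by simp
  have pw: "0 \<le> weight B \<sigma>" using p IH by linarith
  have "m0 * m0 ^ length B \<le> \<psi> (map \<sigma> d) * weight B \<sigma>"
    using h IH p assms(2) by (intro mult_mono) auto
  moreover have "\<psi> (map \<sigma> d) * weight B \<sigma> \<le> M0 * M0 ^ length B"
    using h IH p pw assms(2) by (intro mult_mono) auto
  ultimately show ?case using w by simp
qed

lemma cov_eq:
  assumes "sum \<mu> C = 1"
  shows "EE \<mu> C (\<lambda>\<sigma>. (f \<sigma> - EE \<mu> C f) * (g \<sigma> - EE \<mu> C g)) = EE \<mu> C (\<lambda>\<sigma>. f \<sigma> * g \<sigma>) - EE \<mu> C f * EE \<mu> C g"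
proof -
  define a where "a = EE \<mu> C f"
  define b where "b = EE \<mu> C g"
  have "EE \<mu> C (\<lambda>\<sigma>. (f \<sigma> - a) * (g \<sigma> - b))
      = (\<Sum>\<sigma>\<in>C. \<mu> \<sigma> * (f \<sigma> * g \<sigma>) - b * (\<mu> \<sigma> * f \<sigma>) - a * (\<mu> \<sigma> * g \<sigma>) + a * b * \<mu> \<sigma>)"
    unfolding EE_def by (intro sum.cong) (auto simp: algebra_simps)
  also have "\<dots> = EE \<mu> C (\<lambda>\<sigma>. f \<sigma> * g \<sigma>) - b * a - a * b + a * b * 1"
    unfolding sum.distrib sum_subtractf sum_distrib_left[symmetric] assms
    by (simp add: EE_def a_def b_def)
  finally show ?thesis by (simp add: a_def b_def)
qed

theorem lemma7:
  fixes k :: nat and \<Psi> :: "('o::finite list \<Rightarrow> real) set"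
  assumes "k \<ge> 3" and "finite \<Psi>" and "\<Psi> \<noteq> {}"
    and "\<forall>\<psi>\<in>\<Psi>. \<forall>\<sigma>. length \<sigma> = k \<longrightarrow> \<psi> \<sigma> > 0"
  shows "\<exists>N :: real \<Rightarrow> nat \<Rightarrow> nat. \<forall>(L::nat) (\<alpha>::real). L > 0 \<and> \<alpha> > 0 \<longrightarrow>
           (\<exists>\<epsilon>>0. \<forall>(n::nat) (G :: 'o constraints) (B :: 'o constraints).
              n > N \<epsilon> L \<and> valid_fg n (psi_star k \<Psi>) G \<and> symmetric2 \<epsilon> n G
              \<and> length B = L \<and> valid_fg n (psi_star k \<Psi>) B \<longrightarrow>
                symmetric2 \<alpha> n (G @ B) \<and>
                (\<Sum>x<n. tv (marg1 n G x) (marg1 n (G @ B) x)) < \<alpha> * real n)"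
proof -
  obtain m0 M0 where m0: "0 < m0" and bnd: "\<And>f a \<tau>. (f, a) \<in> psi_star k \<Psi> \<Longrightarrow> length \<tau> = a \<Longrightarrow> m0 \<le> f \<tau> \<and> f \<tau> \<le> M0"
    using weight_bounds[OF assms(2,4)] by blast
  have vb: "\<forall>(d, \<psi>)\<in>set G. m0 \<le> \<psi> (map \<sigma> d) \<and> \<psi> (map \<sigma> d) \<le> M0"
    if "valid_fg n (psi_star k \<Psi>) G" for n G and \<sigma> :: "nat \<Rightarrow> 'o"
    using that bnd unfolding valid_fg_def by fastforce
  show ?thesis
  proof (intro exI[of _ "\<lambda>_ _. 0"] allI impI)
    fix L :: nat and \<alpha> :: real assume La: "0 < L \<and> 0 < \<alpha>"
    define m where "m = m0 ^ L"
    define M where "M = M0 ^ L"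
    define q where "q = real (card (UNIV :: 'o set))"
    define K0 where "K0 = (q^2 + q) * (M / m) + 1"
    have mpos: "m > 0" unfolding m_def using m0 by simp
    have Mpos: "M \<ge> 0"
    proof -
      have "m0 ^ length ([] :: 'o constraints) \<le> M0 ^ length ([]::'o constraints)" by simp
      have "m0 \<le> M0"
      proof -
        obtain \<psi> where "\<psi> \<in> \<Psi>" using assms(3) by blast
        hence "(psiJ k \<psi> {}, card {}) \<in> psi_star k \<Psi>" unfolding psi_star_def
          apply (simp only: mem_Collect_eq)
          apply (rule exI[of _ \<psi>], rule exI[of _ "{}"])
          by simp
        from bnd[OF this, of "[]"] show ?thesis by simp
      qed
      thus ?thesis unfolding M_def using m0 by simp
    qed
    have q0: "q \<ge> 0" unfolding q_def by simp
    have K0pos: "K0 > 0"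
    proof -
      have "0 \<le> (q^2 + q) * (M / m)" using q0 Mpos mpos by simp
      thus ?thesis unfolding K0_def by linarith
    qed
    define \<delta> where "\<delta> = \<alpha> / K0"
    have dpos: "\<delta> > 0" unfolding \<delta>_def using La K0pos by simp
    define \<epsilon> where "\<epsilon> = \<delta>^2 / 2"
    have c1: "q * (M / m) * \<delta> < \<alpha>"
    proof -
      have "0 \<le> q^2 * (M / m)" using q0 Mpos mpos by simp
      hence "q * (M / m) < K0" unfolding K0_def by (simp add: algebra_simps)
      hence "q * (M / m) * \<delta> < K0 * \<delta>" using dpos by (rule mult_strict_right_mono)
      thus ?thesis unfolding \<delta>_def using K0pos by simp
    qed
    have c2: "q^2 * (M / m) * \<delta> < \<alpha>"
    proof -
      have "0 \<le> q * (M / m)" using q0 Mpos mpos by simp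
      hence "q^2 * (M / m) < K0" unfolding K0_def by (simp add: algebra_simps)
      hence "q^2 * (M / m) * \<delta> < K0 * \<delta>" using dpos by (rule mult_strict_right_mono)
      thus ?thesis unfolding \<delta>_def using K0pos by simp
    qed
    show "\<exists>\<epsilon>>0. \<forall>(n::nat) (G :: 'o constraints) (B :: 'o constraints).
              n > 0 \<and> valid_fg n (psi_star k \<Psi>) G \<and> symmetric2 \<epsilon> n G
              \<and> length B = L \<and> valid_fg n (psi_star k \<Psi>) B \<longrightarrow>
                symmetric2 \<alpha> n (G @ B) \<and>
                (\<Sum>x<n. tv (marg1 n G x) (marg1 n (G @ B) x)) < \<alpha> * real n"
    proof (intro exI[of _ \<epsilon>] conjI allI impI)
      show "\<epsilon> > 0" unfolding \<epsilon>_def using dpos by simp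
      fix n :: nat and G B :: "'o constraints"
      assume H: "0 < n \<and> valid_fg n (psi_star k \<Psi>) G \<and> symmetric2 \<epsilon> n G \<and> length B = L \<and> valid_fg n (psi_star k \<Psi>) B"
      define C where "C = (configs n :: (nat \<Rightarrow> 'o) set)"
      have finC: "finite C" unfolding C_def configs_def by (intro finite_PiE) auto
      have neC: "C \<noteq> {}" unfolding C_def configs_def by (simp add: PiE_eq_empty_iff)
      have wG: "weight G \<sigma> > 0" for \<sigma>
        using weight_bnd[OF vb[of n G \<sigma>] m0] H m0 by (meson less_le_trans zero_less_power)
      have wB: "m \<le> weight B \<sigma> \<and> weight B \<sigma> \<le> M" for \<sigma>
        using weight_bnd[OF vb[of n B \<sigma>] m0] H unfolding m_def M_def by auto
      define Z where "Z = partition_fn n G"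
      have Zpos: "Z > 0" unfolding Z_def partition_fn_def C_def[symmetric]
        using finC neC wG by (intro sum_pos) auto
      define \<mu> where "\<mu> = gibbs n G"
      have mu0: "\<forall>\<sigma>\<in>C. \<mu> \<sigma> \<ge> 0" unfolding \<mu>_def gibbs_def Z_def[symmetric]
        using wG Zpos by (simp add: less_imp_le)
      have mu1: "sum \<mu> C = 1" unfolding \<mu>_def gibbs_def Z_def[symmetric]
        using Zpos by (simp add: sum_divide_distrib[symmetric] Z_def partition_fn_def C_def)
      have marg1_eq: "marg1 n G x \<omega> = EE \<mu> C (ind x \<omega>)" for x \<omega>
        unfolding marg1_def EE_def C_def[symmetric] \<mu>_def[symmetric] using finC
        by (auto simp: sum.inter_filter ind_def intro!: sum.cong)
      have marg2_eq: "marg2 n G x y pr = EE \<mu> C (\<lambda>\<sigma>. ind x (fst pr) \<sigma> * ind y (snd pr) \<sigma>)" for x y pr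
        unfolding marg2_def EE_def C_def[symmetric] \<mu>_def[symmetric] using finC
        by (auto simp: sum.inter_filter ind_def intro!: sum.cong)
      have cvb: "\<forall>\<omega>. (\<Sum>y<n. \<Sum>z<n. \<bar>EE \<mu> C (\<lambda>\<sigma>. (ind y \<omega> \<sigma> - EE \<mu> C (ind y \<omega>)) * (ind z \<omega> \<sigma> - EE \<mu> C (ind z \<omega>)))\<bar>) \<le> (\<delta> * n)^2"
      proof
        fix \<omega> :: 'o
        have "(\<Sum>y<n. \<Sum>z<n. \<bar>EE \<mu> C (\<lambda>\<sigma>. (ind y \<omega> \<sigma> - EE \<mu> C (ind y \<omega>)) * (ind z \<omega> \<sigma> - EE \<mu> C (ind z \<omega>)))\<bar>)
           \<le> (\<Sum>y<n. \<Sum>z<n. 2 * tv (marg2 n G y z) (\<lambda>p. marg1 n G y (fst p) * marg1 n G z (snd p)))"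
        proof (intro sum_mono)
          fix y z
          have "\<bar>marg2 n G y z (\<omega>, \<omega>) - marg1 n G y (fst (\<omega>, \<omega>)) * marg1 n G z (snd (\<omega>, \<omega>))\<bar>
              \<le> (\<Sum>p\<in>UNIV. \<bar>marg2 n G y z p - marg1 n G y (fst p) * marg1 n G z (snd p)\<bar>)"
            by (rule member_le_sum) auto
          thus "\<bar>EE \<mu> C (\<lambda>\<sigma>. (ind y \<omega> \<sigma> - EE \<mu> C (ind y \<omega>)) * (ind z \<omega> \<sigma> - EE \<mu> C (ind z \<omega>)))\<bar>
              \<le> 2 * tv (marg2 n G y z) (\<lambda>p. marg1 n G y (fst p) * marg1 n G z (snd p))"
            unfolding cov_eq[OF mu1] tv_def marg1_eq marg2_eq by simp
        qed
        also have "\<dots> = 2 * (\<Sum>y<n. \<Sum>z<n. tv (marg2 n G y z) (\<lambda>p. marg1 n G y (fst p) * marg1 n G z (snd p)))"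
          by (simp add: sum_distrib_left)
        also have "\<dots> \<le> 2 * (\<epsilon> * real n ^ 2)"
          using H unfolding symmetric2_def by simp
        also have "\<dots> = (\<delta> * n)^2" unfolding \<epsilon>_def by (simp add: power_mult_distrib)
        finally show "(\<Sum>y<n. \<Sum>z<n. \<bar>EE \<mu> C (\<lambda>\<sigma>. (ind y \<omega> \<sigma> - EE \<mu> C (ind y \<omega>)) * (ind z \<omega> \<sigma> - EE \<mu> C (ind z \<omega>)))\<bar>) \<le> (\<delta> * n)^2" .
      qed
      interpret S: setting C \<mu> "weight B" m M \<delta> n
        using finC mu0 mu1 wB mpos dpos cvb by unfold_locales auto
      have gibbs_eq: "gibbs n (G @ B) \<sigma> = S.\<nu> \<sigma>" for \<sigma>
      proof -
        have wa: "weight (G @ B) \<sigma> = weight G \<sigma> * weight B \<sigma>" for \<sigma>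
          by (simp add: weight_def)
        have Zc: "sum (weight G) C = Z" unfolding Z_def partition_fn_def C_def by simp
        have "S.D = EE \<mu> C (weight B)" by (rule S.D_def)
        hence "partition_fn n (G @ B) = Z * S.D"
          unfolding partition_fn_def EE_def wa C_def[symmetric] \<mu>_def gibbs_def Z_def[symmetric]
          using Zpos by (simp add: sum_distrib_left Zc)
        moreover have "S.\<nu> \<sigma> = \<mu> \<sigma> * weight B \<sigma> / S.D" by (rule S.\<nu>_def)
        ultimately show ?thesis unfolding gibbs_def wa \<mu>_def Z_def[symmetric]
          using S.D_pos Zpos by simp
      qed
      have margB1: "marg1 n (G @ B) x = (\<lambda>\<omega>. EE S.\<nu> C (ind x \<omega>))" for x
        unfolding marg1_def EE_def C_def[symmetric] gibbs_eq using finC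
        by (auto simp: sum.inter_filter ind_def intro!: sum.cong)
      have margB2: "marg2 n (G @ B) x y = (\<lambda>pr. EE S.\<nu> C (\<lambda>\<sigma>. ind x (fst pr) \<sigma> * ind y (snd pr) \<sigma>))" for x y
        unfolding marg2_def EE_def C_def[symmetric] gibbs_eq using finC
        by (auto simp: sum.inter_filter ind_def intro!: sum.cong)
      have mG1: "marg1 n G x = (\<lambda>\<omega>. EE \<mu> C (ind x \<omega>))" for x using marg1_eq by auto
      have n0: "real n > 0" using H by simp
      show "(\<Sum>x<n. tv (marg1 n G x) (marg1 n (G @ B) x)) < \<alpha> * real n"
      proof -
        have "(\<Sum>x<n. tv (marg1 n G x) (marg1 n (G @ B) x)) \<le> q * (M * (\<delta> * n) / m)"
          using S.R1 unfolding margB1 mG1 q_def .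
        also have "\<dots> = (q * (M / m) * \<delta>) * n" by simp
        also have "\<dots> < \<alpha> * n" using c1 n0 by (rule mult_strict_right_mono)
        finally show ?thesis .
      qed
      show "symmetric2 \<alpha> n (G @ B)"
      proof -
        have "(\<Sum>x<n. \<Sum>y<n. tv (marg2 n (G @ B) x y) (\<lambda>p. marg1 n (G @ B) x (fst p) * marg1 n (G @ B) y (snd p)))
            \<le> q^2 * (n * (M * (\<delta> * n) / m))"
          using S.R2 unfolding margB1 margB2 q_def .
        also have "\<dots> = (q^2 * (M / m) * \<delta>) * real n ^ 2" by (simp add: power2_eq_square)
        also have "\<dots> < \<alpha> * real n ^ 2" using c2 n0 by (intro mult_strict_right_mono) auto
        finally show ?thesis unfolding symmetric2_def .
      qed
    qed
  qed
qed

end
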